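(* There is an absolute constant $C>0$ such that for every $n\ge 2$ and every Boolean function $f:\{0,1\}^n\times\{0,1\}^n\to\{0,1\}$, $$Q^{\parallel}(f)\le C\cdot 2^{2\,R^{1,pub}(f)}\log n .$$
   Context: All protocols compute $f$ with error probability at most $1/3$ on every input. $Q^{\parallel}(f)$ is the minimal total number of qubits communicated in a quantum simultaneous-message-passing (SMP) protocol for $f$ with no shared randomness and no shared entanglement: Alice (holding $x$) and Bob (holding $y$) each send one quantum message to a referee who holds no input and outputs the answer. $R^{1,pub}(f)$ is the minimal number of bits of a classical one-way protocol (Alice sends a single message to Bob, who outputs the answer) where Alice and Bob share an unlimited amount of public randomness not counted in the cost. *)

theory Defs
  imports Complex_Main "HOL-Probability.Probability_Mass_Function" "Jordan_Normal_Form.Matrix"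
begin

(* Inputs x, y \<in> {0,1}^n are bit strings: bool lists of length n.
   A Boolean function f : {0,1}^n x {0,1}^n -> {0,1} is a bool-valued function;
   only its values on length-n lists matter. *)

definition mtrace :: "complex mat \<Rightarrow> complex" where
  "mtrace A = (\<Sum>i<dim_row A. A $$ (i, i))"

definition kron :: "complex mat \<Rightarrow> complex mat \<Rightarrow> complex mat" where
  "kron A B = mat (dim_row A * dim_row B) (dim_col A * dim_col B)
     (\<lambda>(i, j). A $$ (i div dim_row B, j div dim_col B) * B $$ (i mod dim_row B, j mod dim_col B))"

definition psd :: "nat \<Rightarrow> complex mat \<Rightarrow> bool" where
  "psd d A \<longleftrightarrow> A \<in> carrier_mat d d
     \<and> (\<forall>i<d. \<forall>j<d. A $$ (i, j) = cnj (A $$ (j, i)))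
     \<and> (\<forall>v :: nat \<Rightarrow> complex.
          (let q = (\<Sum>i<d. \<Sum>j<d. cnj (v i) * A $$ (i, j) * v j) in Im q = 0 \<and> Re q \<ge> 0))"

definition density :: "nat \<Rightarrow> complex mat \<Rightarrow> bool" where
  "density d \<rho> \<longleftrightarrow> psd d \<rho> \<and> mtrace \<rho> = 1"

text \<open>POVM element M (for outcome 1) of a two-outcome measurement {M, I - M}.\<close>
definition effect :: "nat \<Rightarrow> complex mat \<Rightarrow> bool" where
  "effect d M \<longleftrightarrow> psd d M \<and> psd d (1\<^sub>m d - M)"

text \<open>Alice sends qA qubits (state rho x on 2^qA dims), Bob sends qB qubits
  (state sigma y); the referee measures the product state rho x (x) sigma y with
  the two-outcome POVM {M, I-M} and outputs 1 on outcome M.\<close>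
definition qsmp_protocol :: "nat \<Rightarrow> (bool list \<Rightarrow> bool list \<Rightarrow> bool) \<Rightarrow> nat \<Rightarrow> nat \<Rightarrow> bool" where
  "qsmp_protocol n f qA qB \<longleftrightarrow>
     (\<exists>(\<rho> :: bool list \<Rightarrow> complex mat) (\<sigma> :: bool list \<Rightarrow> complex mat) (M :: complex mat).
        (\<forall>x. length x = n \<longrightarrow> density (2 ^ qA) (\<rho> x))
      \<and> (\<forall>y. length y = n \<longrightarrow> density (2 ^ qB) (\<sigma> y))
      \<and> effect (2 ^ (qA + qB)) M
      \<and> (\<forall>x y. length x = n \<longrightarrow> length y = n \<longrightarrow>
           (let p = Re (mtrace (M * kron (\<rho> x) (\<sigma> y)))
            in if f x y then p \<ge> 2/3 else 1 - p \<ge> 2/3)))"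

definition Qpar :: "nat \<Rightarrow> (bool list \<Rightarrow> bool list \<Rightarrow> bool) \<Rightarrow> nat" where
  "Qpar n f = (LEAST q. \<exists>qA qB. qA + qB = q \<and> qsmp_protocol n f qA qB)"

text \<open>A public-coin one-way protocol with c bits is a probability distribution
  (over the public random string, equivalently) over pairs (a, b) of deterministic
  protocols: Alice sends the c-bit message a x, Bob outputs b y (a x).\<close>
definition oneway_pub_protocol ::
  "nat \<Rightarrow> (bool list \<Rightarrow> bool list \<Rightarrow> bool) \<Rightarrow> nat \<Rightarrow> bool" where
  "oneway_pub_protocol n f c \<longleftrightarrow>
     (\<exists>P :: ((bool list \<Rightarrow> bool list) \<times> (bool list \<Rightarrow> bool list \<Rightarrow> bool)) pmf.
        (\<forall>ab \<in> set_pmf P. \<forall>x. length x = n \<longrightarrow> length (fst ab x) = c)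
      \<and> (\<forall>x y. length x = n \<longrightarrow> length y = n \<longrightarrow>
           measure_pmf.prob P {(a, b). b y (a x) = f x y} \<ge> 2/3))"

definition R1pub :: "nat \<Rightarrow> (bool list \<Rightarrow> bool list \<Rightarrow> bool) \<Rightarrow> nat" where
  "R1pub n f = (LEAST c. oneway_pub_protocol n f c)"

end

theory Submission
  imports Defs "HOL-Probability.Probability"
begin

lemma mtrace_mult:
  assumes "A \<in> carrier_mat d d" "B \<in> carrier_mat d d"
  shows "mtrace (A * B) = (\<Sum>I<d. \<Sum>J<d. A $$ (I, J) * B $$ (J, I))"
  using assms unfolding mtrace_def
  by (auto simp: scalar_prod_def intro!: sum.cong)

lemma cnj_mult_self: "cnj z * z = complex_of_real ((cmod z)\<^sup>2)"
  by (metis complex_norm_square mult.commute of_real_power)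

lemma density_rank1:
  assumes "(\<Sum>i<m. (w i)\<^sup>2) = (1::real)"
  shows "density m (mat m m (\<lambda>(i,j). complex_of_real (w i * w j)))"
proof -
  let ?A = "mat m m (\<lambda>(i,j). complex_of_real (w i * w j))"
  have q: "(\<Sum>i<m. \<Sum>j<m. cnj (v i) * ?A $$ (i, j) * v j)
       = complex_of_real ((cmod (\<Sum>j<m. complex_of_real (w j) * v j))\<^sup>2)" for v :: "nat \<Rightarrow> complex"
  proof -
    have "(\<Sum>i<m. \<Sum>j<m. cnj (v i) * ?A $$ (i, j) * v j)
        = (\<Sum>i<m. \<Sum>j<m. cnj (complex_of_real (w i) * v i) * (complex_of_real (w j) * v j))"
      by (intro sum.cong refl) (simp add: mult_ac)
    also have "\<dots> = (\<Sum>i<m. cnj (complex_of_real (w i) * v i)) * (\<Sum>j<m. complex_of_real (w j) * v j)"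
      by (rule sum_product[symmetric])
    also have "\<dots> = cnj (\<Sum>i<m. complex_of_real (w i) * v i) * (\<Sum>j<m. complex_of_real (w j) * v j)"
      by (simp only: cnj_sum)
    also have "\<dots> = complex_of_real ((cmod (\<Sum>j<m. complex_of_real (w j) * v j))\<^sup>2)"
      by (rule cnj_mult_self)
    finally show ?thesis .
  qed
  have tr: "mtrace ?A = 1"
  proof -
    have "mtrace ?A = (\<Sum>i<m. complex_of_real ((w i)\<^sup>2))"
      unfolding mtrace_def by (simp add: power2_eq_square)
    also have "\<dots> = complex_of_real (\<Sum>i<m. (w i)\<^sup>2)" by simp
    finally show ?thesis using assms by simp
  qed
  show ?thesis
    unfolding density_def psd_def Let_def
  proof (intro conjI allI impI)
    fix v :: "nat \<Rightarrow> complex"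
    show "Im (\<Sum>i<m. \<Sum>j<m. cnj (v i) * ?A $$ (i, j) * v j) = 0" unfolding q by simp
    show "0 \<le> Re (\<Sum>i<m. \<Sum>j<m. cnj (v i) * ?A $$ (i, j) * v j)" unfolding q by simp
  qed (use tr in \<open>auto simp: mult.commute\<close>)
qed


lemma pair_div: fixes j i D :: nat assumes "j < D" shows "(j + i * D) div D = i"
proof -
  have "D \<noteq> 0" using assms by auto
  then show ?thesis using assms by simp
qed
lemma pair_mod: fixes j i D :: nat assumes "j < D" shows "(j + i * D) mod D = j"
proof -
  have "D \<noteq> 0" using assms by auto
  then show ?thesis using assms by simp
qed
lemma pair_lt: fixes i j A D :: nat shows "i < A \<Longrightarrow> j < D \<Longrightarrow> j + i * D < A * D"
proof -
  assume "i < A" "j < D"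
  then have "j + i * D < D + i * D" by linarith
  also have "\<dots> = (i + 1) * D" by simp
  also have "\<dots> \<le> A * D" using \<open>i < A\<close> by (intro mult_right_mono) auto
  finally show ?thesis .
qed


lemma kron_rank1:
  fixes A B :: "nat \<Rightarrow> real" and m :: nat
  assumes m: "m > 0"
  shows "kron (mat m m (\<lambda>(i,j). complex_of_real (A i * A j))) (mat m m (\<lambda>(i,j). complex_of_real (B i * B j)))
     = mat (m*m) (m*m) (\<lambda>(I,J). complex_of_real ((A (I div m) * B (I mod m)) * (A (J div m) * B (J mod m))))"
proof (rule eq_matI)
  fix I J assume I: "I < dim_row (mat (m*m) (m*m) (\<lambda>(I,J). complex_of_real ((A (I div m) * B (I mod m)) * (A (J div m) * B (J mod m)))))"
    and J: "J < dim_col (mat (m*m) (m*m) (\<lambda>(I,J). complex_of_real ((A (I div m) * B (I mod m)) * (A (J div m) * B (J mod m)))))"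
  have "I div m < m" "J div m < m" using I J by (auto simp: less_mult_imp_div_less)
  moreover have "I mod m < m" "J mod m < m" using m by auto
  ultimately show "kron (mat m m (\<lambda>(i,j). complex_of_real (A i * A j))) (mat m m (\<lambda>(i,j). complex_of_real (B i * B j))) $$ (I, J)
     = mat (m*m) (m*m) (\<lambda>(I,J). complex_of_real ((A (I div m) * B (I mod m)) * (A (J div m) * B (J mod m)))) $$ (I, J)"
    using I J unfolding kron_def by (simp add: mult_ac)
qed (auto simp: kron_def)


definition sdiff :: "nat set \<Rightarrow> nat set \<Rightarrow> nat set" where
  "sdiff U T = (U - T) \<union> (T - U)"

definition chi :: "nat set \<Rightarrow> nat set \<Rightarrow> real" where
  "chi s U = (-1) ^ card (s \<inter> U)"

lemma card_sdiff_parity: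
  assumes "finite A" "finite B"
  shows "card (sdiff A B) + 2 * card (A \<inter> B) = card A + card B"
proof -
  have d: "(A - B) \<inter> (B - A) = {}" by auto
  have "card (sdiff A B) = card (A - B) + card (B - A)"
    unfolding sdiff_def using assms d by (simp add: card_Un_disjoint)
  moreover have "card A = card (A \<inter> B) + card (A - B)"
    using assms(1) by (rule card_Int_Diff)
  moreover have "card B = card (B \<inter> A) + card (B - A)"
    using assms(2) by (rule card_Int_Diff)
  moreover have "B \<inter> A = A \<inter> B" by auto
  ultimately show ?thesis by simp
qed

lemma chi_sdiff:
  assumes "finite s"
  shows "chi s (sdiff U T) = chi s U * chi s T"
proof -
  have e: "s \<inter> sdiff U T = sdiff (s \<inter> U) (s \<inter> T)" unfolding sdiff_def by auto
  have "card (sdiff (s \<inter> U) (s \<inter> T)) + 2 * card ((s \<inter> U) \<inter> (s \<inter> T)) = card (s \<inter> U) + card (s \<inter> T)"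
    by (rule card_sdiff_parity) (use assms in auto)
  then have "(-1::real) ^ (card (sdiff (s \<inter> U) (s \<inter> T)) + 2 * card ((s \<inter> U) \<inter> (s \<inter> T))) = (-1) ^ (card (s \<inter> U) + card (s \<inter> T))"
    by simp
  then show ?thesis unfolding chi_def e by (simp add: power_add power_mult)
qed

lemma chi_comm: "chi s U = chi U s" unfolding chi_def by (simp add: Int_commute)

lemma chi_sq: "chi s U * chi s U = 1" unfolding chi_def by (simp flip: power_add add: power_mult)

lemma sdiff_inv: "sdiff (sdiff U T) T = U" unfolding sdiff_def by auto
lemma sdiff_self: "sdiff U U = {}" unfolding sdiff_def by auto
lemma sdiff_sub: "U \<subseteq> A \<Longrightarrow> T \<subseteq> A \<Longrightarrow> sdiff U T \<subseteq> A" unfolding sdiff_def by auto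

lemma bij_sdiff:
  assumes "T \<subseteq> A"
  shows "bij_betw (\<lambda>U. sdiff U T) (Pow A) (Pow A)"
  by (rule bij_betwI[of _ _ _ "\<lambda>U. sdiff U T"]) (use assms in \<open>auto simp: sdiff_inv sdiff_sub\<close>)

lemma reindex_sdiff:
  assumes "T \<subseteq> A"
  shows "(\<Sum>U\<in>Pow A. g (sdiff U T)) = (\<Sum>U\<in>Pow A. g U)"
  using bij_sdiff[OF assms] by (rule sum.reindex_bij_betw)

lemma chi_sum:
  assumes U: "U \<subseteq> {..<K}" "U \<noteq> {}"
  shows "(\<Sum>s\<in>Pow {..<K}. chi s U) = 0"
proof -
  obtain u where u: "u \<in> U" using U by auto
  have uK: "{u} \<subseteq> {..<K}" using u U by auto
  have "(\<Sum>s\<in>Pow {..<K}. chi s U) = (\<Sum>s\<in>Pow {..<K}. chi (sdiff s {u}) U)"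
    by (rule reindex_sdiff[symmetric]) (rule uK)
  also have "\<dots> = (\<Sum>s\<in>Pow {..<K}. - chi s U)"
  proof (intro sum.cong refl)
    fix s assume "s \<in> Pow {..<K}"
    have "chi (sdiff s {u}) U = chi U (sdiff s {u})" by (rule chi_comm)
    also have "\<dots> = chi U s * chi U {u}" by (rule chi_sdiff) (use U in \<open>auto intro: finite_subset\<close>)
    also have "chi U {u} = -1" unfolding chi_def using u by simp
    finally show "chi (sdiff s {u}) U = - chi s U" by (simp add: chi_comm)
  qed
  finally show ?thesis by (simp add: sum_negf)
qed

lemma chi_sum_empty: "(\<Sum>s\<in>Pow {..<K}. chi s {}) = 2 ^ K"
  unfolding chi_def by (simp add: card_Pow)

lemma chi_sum_delta:
  assumes "U \<subseteq> {..<K}"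
  shows "(\<Sum>s\<in>Pow {..<K}. chi s U) = (if U = {} then 2 ^ K else 0)"
  using chi_sum[OF assms] chi_sum_empty by auto

locale zgrp =
  fixes d K :: nat and pi :: "nat set \<Rightarrow> nat \<Rightarrow> nat"
  assumes rng: "\<And>U I. U \<subseteq> {..<K} \<Longrightarrow> I < d \<Longrightarrow> pi U I < d"
  and cmp: "\<And>U T I. U \<subseteq> {..<K} \<Longrightarrow> T \<subseteq> {..<K} \<Longrightarrow> I < d \<Longrightarrow> pi U (pi T I) = pi (sdiff U T) I"
  and idt: "\<And>I. I < d \<Longrightarrow> pi {} I = I"
begin

lemma invol: "U \<subseteq> {..<K} \<Longrightarrow> I < d \<Longrightarrow> pi U (pi U I) = I"
  by (simp add: cmp sdiff_self idt)

lemma reindex_pi: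
  assumes "U \<subseteq> {..<K}"
  shows "(\<Sum>I<d. g (pi U I)) = (\<Sum>I<d. g I)"
proof -
  have "bij_betw (pi U) {..<d} {..<d}"
    by (rule bij_betwI[of _ _ _ "pi U"]) (use assms rng invol in auto)
  then show ?thesis by (rule sum.reindex_bij_betw)
qed

definition Em :: "nat set \<Rightarrow> nat \<Rightarrow> nat \<Rightarrow> complex" where
  "Em s I J = (\<Sum>U\<in>Pow {..<K}. complex_of_real (chi s U) * of_bool (J = pi U I)) / 2 ^ K"

definition Ml :: "(nat set \<Rightarrow> real) \<Rightarrow> nat \<Rightarrow> nat \<Rightarrow> complex" where
  "Ml lam I J = (\<Sum>s\<in>Pow {..<K}. complex_of_real (lam s) * Em s I J)"

definition MatL :: "(nat set \<Rightarrow> real) \<Rightarrow> complex mat" where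
  "MatL lam = mat d d (\<lambda>(I, J). Ml lam I J)"

definition wv :: "(nat \<Rightarrow> complex) \<Rightarrow> nat set \<Rightarrow> nat \<Rightarrow> complex" where
  "wv v s I = (\<Sum>U\<in>Pow {..<K}. complex_of_real (chi s U) * v (pi U I)) / 2 ^ K"

lemma Em_sym:
  assumes "I < d" "J < d"
  shows "Em s I J = cnj (Em s J I)"
proof -
  have "(J = pi U I) = (I = pi U J)" if "U \<in> Pow {..<K}" for U
    using that assms invol by auto
  then have "Em s I J = Em s J I" unfolding Em_def by (intro arg_cong[where f = "\<lambda>x. x / 2 ^ K"] sum.cong) auto
  moreover have "cnj (Em s J I) = Em s J I" unfolding Em_def by (simp add: cnj_sum)
  ultimately show ?thesis by simp
qed

lemma delta_sum:
  fixes c z :: complex and v :: "nat \<Rightarrow> complex"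
  assumes "q < d"
  shows "(\<Sum>J<d. c * of_bool (J = q) / z * v J) = c / z * v q"
proof -
  have "(\<Sum>J<d. c * of_bool (J = q) / z * v J) = (\<Sum>J<d. if J = q then c / z * v J else (0::complex))"
    by (intro sum.cong) auto
  also have "\<dots> = c / z * v q" using assms by simp
  finally show ?thesis .
qed

lemma Em_row:
  assumes "I < d"
  shows "(\<Sum>J<d. Em s I J * v J) = wv v s I"
proof -
  have "(\<Sum>J<d. Em s I J * v J) = (\<Sum>J<d. \<Sum>U\<in>Pow {..<K}. complex_of_real (chi s U) * of_bool (J = pi U I) / 2 ^ K * v J)"
    unfolding Em_def by (simp only: sum_divide_distrib sum_distrib_right)
  also have "\<dots> = (\<Sum>U\<in>Pow {..<K}. \<Sum>J<d. complex_of_real (chi s U) * of_bool (J = pi U I) / 2 ^ K * v J)"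
    by (rule sum.swap)
  also have "\<dots> = (\<Sum>U\<in>Pow {..<K}. complex_of_real (chi s U) / 2 ^ K * v (pi U I))"
    using assms by (intro sum.cong refl) (rule delta_sum, auto intro: rng)
  also have "\<dots> = wv v s I"
    unfolding wv_def by (simp add: sum_divide_distrib)
  finally show ?thesis .
qed

lemma Ml_row:
  assumes "I < d"
  shows "(\<Sum>J<d. Ml lam I J * v J) = (\<Sum>s\<in>Pow {..<K}. complex_of_real (lam s) * wv v s I)"
proof -
  have "(\<Sum>J<d. Ml lam I J * v J) = (\<Sum>J<d. \<Sum>s\<in>Pow {..<K}. complex_of_real (lam s) * (Em s I J * v J))"
    unfolding Ml_def by (simp add: sum_distrib_right mult.assoc)
  also have "\<dots> = (\<Sum>s\<in>Pow {..<K}. complex_of_real (lam s) * (\<Sum>J<d. Em s I J * v J))"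
    by (subst sum.swap) (simp add: sum_distrib_left)
  also have "\<dots> = (\<Sum>s\<in>Pow {..<K}. complex_of_real (lam s) * wv v s I)"
    using assms by (simp add: Em_row)
  finally show ?thesis .
qed

lemma wv_equiv:
  assumes "T \<subseteq> {..<K}" "I < d" "s \<subseteq> {..<K}"
  shows "wv v s (pi T I) = complex_of_real (chi s T) * wv v s I"
proof -
  have fs: "finite s" using assms(3) finite_subset by blast
  have "wv v s (pi T I) = (\<Sum>U\<in>Pow {..<K}. complex_of_real (chi s U) * v (pi (sdiff U T) I)) / 2 ^ K"
    unfolding wv_def using assms by (intro arg_cong[where f = "\<lambda>x. x / 2 ^ K"] sum.cong refl) (simp add: cmp)
  also have "\<dots> = (\<Sum>U\<in>Pow {..<K}. complex_of_real (chi s (sdiff U T)) * v (pi (sdiff (sdiff U T) T) I)) / 2 ^ K"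
    by (subst reindex_sdiff[OF assms(1), symmetric]) simp
  also have "\<dots> = (\<Sum>U\<in>Pow {..<K}. complex_of_real (chi s T) * (complex_of_real (chi s U) * v (pi U I))) / 2 ^ K"
    by (intro arg_cong[where f = "\<lambda>x. x / 2 ^ K"] sum.cong refl) (simp add: sdiff_inv chi_sdiff[OF fs] mult_ac)
  also have "\<dots> = complex_of_real (chi s T) * wv v s I"
    unfolding wv_def by (simp add: sum_distrib_left)
  finally show ?thesis .
qed

lemma wv_norm:
  assumes "s \<subseteq> {..<K}"
  shows "(\<Sum>I<d. cnj (v I) * wv v s I) = (\<Sum>I<d. cnj (wv v s I) * wv v s I)"
proof -
  have "(\<Sum>I<d. cnj (wv v s I) * wv v s I)
      = (\<Sum>I<d. \<Sum>U\<in>Pow {..<K}. complex_of_real (chi s U) * cnj (v (pi U I)) * wv v s I) / 2 ^ K"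
    unfolding wv_def[of v s] by (simp add: cnj_sum sum_divide_distrib sum_distrib_right)
  also have "\<dots> = (\<Sum>U\<in>Pow {..<K}. complex_of_real (chi s U) * (\<Sum>I<d. cnj (v (pi U I)) * wv v s I)) / 2 ^ K"
    by (subst sum.swap) (simp add: sum_distrib_left mult.assoc)
  also have "\<dots> = (\<Sum>U\<in>Pow {..<K}. complex_of_real (chi s U) * (\<Sum>I<d. cnj (v (pi U (pi U I))) * wv v s (pi U I))) / 2 ^ K"
  proof (intro arg_cong[where f = "\<lambda>x. x / 2 ^ K"] sum.cong refl)
    fix U assume U: "U \<in> Pow {..<K}"
    have "(\<Sum>I<d. cnj (v (pi U I)) * wv v s I) = (\<Sum>I<d. cnj (v (pi U (pi U I))) * wv v s (pi U I))"
      by (rule reindex_pi[where g = "\<lambda>I. cnj (v (pi U I)) * wv v s I", symmetric]) (use U in auto)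
    then show "complex_of_real (chi s U) * (\<Sum>I<d. cnj (v (pi U I)) * wv v s I) = complex_of_real (chi s U) * (\<Sum>I<d. cnj (v (pi U (pi U I))) * wv v s (pi U I))"
      by simp
  qed
  also have "\<dots> = (\<Sum>U\<in>Pow {..<K}. (\<Sum>I<d. cnj (v I) * wv v s I)) / 2 ^ K"
  proof (intro arg_cong[where f = "\<lambda>x. x / 2 ^ K"] sum.cong refl)
    fix U assume U: "U \<in> Pow {..<K}"
    have "(\<Sum>I<d. cnj (v (pi U (pi U I))) * wv v s (pi U I)) = (\<Sum>I<d. complex_of_real (chi s U) * (cnj (v I) * wv v s I))"
      using U assms by (intro sum.cong refl) (simp add: invol wv_equiv mult_ac)
    then show "complex_of_real (chi s U) * (\<Sum>I<d. cnj (v (pi U (pi U I))) * wv v s (pi U I)) = (\<Sum>I<d. cnj (v I) * wv v s I)"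
      by (simp add: sum_distrib_left mult.assoc[symmetric] of_real_mult[symmetric] chi_sq)
  qed
  also have "\<dots> = (\<Sum>I<d. cnj (v I) * wv v s I)"
    by (simp add: card_Pow)
  finally show ?thesis by simp
qed

lemma wv_sum:
  assumes "I < d"
  shows "(\<Sum>s\<in>Pow {..<K}. wv v s I) = v I"
proof -
  have "(\<Sum>s\<in>Pow {..<K}. wv v s I) = (\<Sum>U\<in>Pow {..<K}. complex_of_real (\<Sum>s\<in>Pow {..<K}. chi s U) * v (pi U I)) / 2 ^ K"
  proof -
    have "(\<Sum>s\<in>Pow {..<K}. wv v s I) = (\<Sum>s\<in>Pow {..<K}. \<Sum>U\<in>Pow {..<K}. complex_of_real (chi s U) * v (pi U I)) / 2 ^ K"
      unfolding wv_def by (simp add: sum_divide_distrib)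
    also have "\<dots> = (\<Sum>U\<in>Pow {..<K}. \<Sum>s\<in>Pow {..<K}. complex_of_real (chi s U) * v (pi U I)) / 2 ^ K"
      by (subst sum.swap) (rule refl)
    also have "\<dots> = (\<Sum>U\<in>Pow {..<K}. complex_of_real (\<Sum>s\<in>Pow {..<K}. chi s U) * v (pi U I)) / 2 ^ K"
      by (simp add: sum_distrib_right)
    finally show ?thesis .
  qed
  also have "\<dots> = (\<Sum>U\<in>Pow {..<K}. (if U = {} then 2 ^ K * v I else 0)) / 2 ^ K"
    using assms by (intro arg_cong[where f = "\<lambda>x. x / 2 ^ K"] sum.cong refl) (auto simp: chi_sum_delta idt)
  also have "\<dots> = v I" by (simp add: sum.delta)
  finally show ?thesis .
qed

end

context zgrp begin

lemma Ml_herm: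
  assumes "I < d" "J < d"
  shows "Ml lam I J = cnj (Ml lam J I)"
  unfolding Ml_def using Em_sym[OF assms] by (simp add: cnj_sum)

lemma quadM:
  "(\<Sum>I<d. \<Sum>J<d. cnj (v I) * Ml lam I J * v J)
     = complex_of_real (\<Sum>s\<in>Pow {..<K}. lam s * (\<Sum>I<d. (cmod (wv v s I))\<^sup>2))"
proof -
  have "(\<Sum>I<d. \<Sum>J<d. cnj (v I) * Ml lam I J * v J) = (\<Sum>I<d. cnj (v I) * (\<Sum>s\<in>Pow {..<K}. complex_of_real (lam s) * wv v s I))"
  proof (intro sum.cong refl)
    fix I assume "I \<in> {..<d}"
    then have "(\<Sum>J<d. Ml lam I J * v J) = (\<Sum>s\<in>Pow {..<K}. complex_of_real (lam s) * wv v s I)" by (simp add: Ml_row)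
    then show "(\<Sum>J<d. cnj (v I) * Ml lam I J * v J) = cnj (v I) * (\<Sum>s\<in>Pow {..<K}. complex_of_real (lam s) * wv v s I)"
      by (simp add: mult.assoc flip: sum_distrib_left)
  qed
  also have "\<dots> = (\<Sum>s\<in>Pow {..<K}. complex_of_real (lam s) * (\<Sum>I<d. cnj (v I) * wv v s I))"
  proof -
    have "(\<Sum>I<d. cnj (v I) * (\<Sum>s\<in>Pow {..<K}. complex_of_real (lam s) * wv v s I))
        = (\<Sum>I<d. \<Sum>s\<in>Pow {..<K}. complex_of_real (lam s) * (cnj (v I) * wv v s I))"
      by (simp only: sum_distrib_left mult.left_commute)
    also have "\<dots> = (\<Sum>s\<in>Pow {..<K}. \<Sum>I<d. complex_of_real (lam s) * (cnj (v I) * wv v s I))"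
      by (rule sum.swap)
    also have "\<dots> = (\<Sum>s\<in>Pow {..<K}. complex_of_real (lam s) * (\<Sum>I<d. cnj (v I) * wv v s I))"
      by (simp only: sum_distrib_left)
    finally show ?thesis .
  qed
  also have "\<dots> = (\<Sum>s\<in>Pow {..<K}. complex_of_real (lam s) * (\<Sum>I<d. cnj (wv v s I) * wv v s I))"
    by (intro sum.cong refl) (simp add: wv_norm)
  also have "\<dots> = complex_of_real (\<Sum>s\<in>Pow {..<K}. lam s * (\<Sum>I<d. (cmod (wv v s I))\<^sup>2))"
    by (simp add: cnj_mult_self)
  finally show ?thesis .
qed

lemma Em_total:
  assumes "I < d" "J < d"
  shows "(\<Sum>s\<in>Pow {..<K}. Em s I J) = of_bool (J = I)"
proof -
  have "(\<Sum>s\<in>Pow {..<K}. Em s I J) = (\<Sum>U\<in>Pow {..<K}. complex_of_real (\<Sum>s\<in>Pow {..<K}. chi s U) * of_bool (J = pi U I)) / 2 ^ K"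
  proof -
    have "(\<Sum>s\<in>Pow {..<K}. Em s I J) = (\<Sum>s\<in>Pow {..<K}. \<Sum>U\<in>Pow {..<K}. complex_of_real (chi s U) * of_bool (J = pi U I)) / 2 ^ K"
      unfolding Em_def by (simp only: sum_divide_distrib)
    also have "\<dots> = (\<Sum>U\<in>Pow {..<K}. \<Sum>s\<in>Pow {..<K}. complex_of_real (chi s U) * of_bool (J = pi U I)) / 2 ^ K"
      by (subst sum.swap) (rule refl)
    also have "\<dots> = (\<Sum>U\<in>Pow {..<K}. complex_of_real (\<Sum>s\<in>Pow {..<K}. chi s U) * of_bool (J = pi U I)) / 2 ^ K"
      by (simp only: of_real_sum sum_distrib_right)
    finally show ?thesis .
  qed
  also have "\<dots> = (\<Sum>U\<in>Pow {..<K}. if U = {} then 2 ^ K * of_bool (J = I) else 0) / 2 ^ K"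
    using assms by (intro arg_cong[where f = "\<lambda>x. x / 2 ^ K"] sum.cong refl) (auto simp: chi_sum_delta idt)
  also have "\<dots> = of_bool (J = I)" by (simp add: sum.delta)
  finally show ?thesis .
qed

lemma Ml_compl:
  assumes "I < d" "J < d"
  shows "Ml (\<lambda>s. 1 - lam s) I J = of_bool (J = I) - Ml lam I J"
  unfolding Ml_def using Em_total[OF assms]
  by (simp add: algebra_simps sum_subtractf)

lemma psd_MatL:
  assumes "\<And>s. s \<subseteq> {..<K} \<Longrightarrow> lam s \<ge> 0"
  shows "psd d (MatL lam)"
  unfolding psd_def MatL_def Let_def
proof (intro conjI allI impI)
  fix v :: "nat \<Rightarrow> complex"
  have e: "(\<Sum>i<d. \<Sum>j<d. cnj (v i) * mat d d (\<lambda>(I, J). Ml lam I J) $$ (i, j) * v j)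
      = complex_of_real (\<Sum>s\<in>Pow {..<K}. lam s * (\<Sum>I<d. (cmod (wv v s I))\<^sup>2))"
    unfolding quadM[symmetric] by (intro sum.cong refl) simp
  show "Im (\<Sum>i<d. \<Sum>j<d. cnj (v i) * mat d d (\<lambda>(I, J). Ml lam I J) $$ (i, j) * v j) = 0"
    unfolding e by simp
  show "0 \<le> Re (\<Sum>i<d. \<Sum>j<d. cnj (v i) * mat d d (\<lambda>(I, J). Ml lam I J) $$ (i, j) * v j)"
    unfolding e using assms by (auto intro!: sum_nonneg mult_nonneg_nonneg)
qed (auto intro: Ml_herm)

lemma effect_MatL:
  assumes "\<And>s. s \<subseteq> {..<K} \<Longrightarrow> lam s \<ge> 0" "\<And>s. s \<subseteq> {..<K} \<Longrightarrow> lam s \<le> 1"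
  shows "effect d (MatL lam)"
proof -
  have "1\<^sub>m d - MatL lam = MatL (\<lambda>s. 1 - lam s)"
    by (rule eq_matI) (auto simp: MatL_def Ml_compl)
  moreover have "psd d (MatL (\<lambda>s. 1 - lam s))" by (rule psd_MatL) (use assms in auto)
  ultimately show ?thesis unfolding effect_def using psd_MatL[OF assms(1)] by simp
qed

lemma trace_MatL:
  fixes W :: "nat \<Rightarrow> real"
  shows "mtrace (MatL lam * mat d d (\<lambda>(I, J). complex_of_real (W I * W J)))
    = complex_of_real (\<Sum>s\<in>Pow {..<K}. lam s * (\<Sum>U\<in>Pow {..<K}. chi s U * (\<Sum>I<d. W (pi U I) * W I)) / 2 ^ K)"
proof -
  define R where "R I = (\<Sum>s\<in>Pow {..<K}. lam s * (\<Sum>U\<in>Pow {..<K}. chi s U * (W (pi U I) * W I)) / 2 ^ K)" for I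
  have "mtrace (MatL lam * mat d d (\<lambda>(I, J). complex_of_real (W I * W J)))
      = (\<Sum>I<d. \<Sum>J<d. Ml lam I J * complex_of_real (W J * W I))"
    by (subst mtrace_mult[of _ d]) (auto simp: MatL_def)
  also have "\<dots> = (\<Sum>I<d. complex_of_real (R I))"
  proof (intro sum.cong refl)
    fix I assume I: "I \<in> {..<d}"
    have "(\<Sum>J<d. Ml lam I J * complex_of_real (W J * W I)) = (\<Sum>s\<in>Pow {..<K}. complex_of_real (lam s) * wv (\<lambda>J. complex_of_real (W J * W I)) s I)"
      using I by (simp add: Ml_row)
    also have "\<dots> = (\<Sum>s\<in>Pow {..<K}. complex_of_real (lam s) * (\<Sum>U\<in>Pow {..<K}. complex_of_real (chi s U) * complex_of_real (W (pi U I) * W I)) / 2 ^ K)"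
      unfolding wv_def by (simp only: times_divide_eq_right)
    also have "\<dots> = complex_of_real (R I)"
      unfolding R_def by (simp only: of_real_sum of_real_mult of_real_divide of_real_power of_real_numeral)
    finally show "(\<Sum>J<d. Ml lam I J * complex_of_real (W J * W I)) = complex_of_real (R I)" .
  qed
  also have "\<dots> = complex_of_real (\<Sum>I<d. R I)" by simp
  also have "(\<Sum>I<d. R I) = (\<Sum>s\<in>Pow {..<K}. \<Sum>I<d. lam s * (\<Sum>U\<in>Pow {..<K}. chi s U * (W (pi U I) * W I)) / 2 ^ K)"
    unfolding R_def by (rule sum.swap)
  also have "\<dots> = (\<Sum>s\<in>Pow {..<K}. lam s * (\<Sum>U\<in>Pow {..<K}. chi s U * (\<Sum>I<d. W (pi U I) * W I)) / 2 ^ K)"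
  proof (intro sum.cong refl)
    fix s
    have "(\<Sum>I<d. lam s * (\<Sum>U\<in>Pow {..<K}. chi s U * (W (pi U I) * W I)) / 2 ^ K)
        = lam s * (\<Sum>I<d. \<Sum>U\<in>Pow {..<K}. chi s U * (W (pi U I) * W I)) / 2 ^ K"
      by (simp only: sum_divide_distrib sum_distrib_left)
    also have "(\<Sum>I<d. \<Sum>U\<in>Pow {..<K}. chi s U * (W (pi U I) * W I)) = (\<Sum>U\<in>Pow {..<K}. \<Sum>I<d. chi s U * (W (pi U I) * W I))"
      by (rule sum.swap)
    also have "\<dots> = (\<Sum>U\<in>Pow {..<K}. chi s U * (\<Sum>I<d. W (pi U I) * W I))"
      by (simp only: sum_distrib_left)
    finally show "(\<Sum>I<d. lam s * (\<Sum>U\<in>Pow {..<K}. chi s U * (W (pi U I) * W I)) / 2 ^ K)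
        = lam s * (\<Sum>U\<in>Pow {..<K}. chi s U * (\<Sum>I<d. W (pi U I) * W I)) / 2 ^ K" .
  qed
  finally show ?thesis .
qed

end

lemma prod_if_const:
  fixes c :: real and K :: nat
  assumes "U \<subseteq> {..<K}"
  shows "(\<Prod>l<K. if l \<in> U then c else 1) = c ^ card U"
proof -
  have "(\<Prod>l<K. if l \<in> U then c else 1) = (\<Prod>l\<in>U. c)"
    by (rule prod.mono_neutral_cong_right) (use assms in auto)
  then show ?thesis by simp
qed

lemma prod_if_two:
  fixes c e :: real
  assumes "s \<subseteq> A" "finite A"
  shows "(\<Prod>l\<in>A. if l \<in> s then c else e) = c ^ card s * e ^ (card A - card s)"
proof -
  have "(\<Prod>l\<in>A. if l \<in> s then c else e) = prod (\<lambda>_. c) (A \<inter> {l. l \<in> s}) * prod (\<lambda>_. e) (A \<inter> - {l. l \<in> s})"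
    by (rule prod.If_cases[OF assms(2)])
  also have "A \<inter> {l. l \<in> s} = s" using assms by auto
  also have "A \<inter> - {l. l \<in> s} = A - s" by auto
  finally show ?thesis using assms by (simp add: card_Diff_subset finite_subset)
qed

lemma chi_pow:
  fixes x :: real
  assumes "finite U" "finite s"
  shows "chi s U * x ^ card U = (\<Prod>l\<in>U. if l \<in> s then - x else x)"
proof -
  have "(\<Prod>l\<in>U. if l \<in> s then - x else x) = (\<Prod>l\<in>U. (if l \<in> s then -1 else 1) * x)"
    by (intro prod.cong) auto
  also have "\<dots> = (\<Prod>l\<in>U. (if l \<in> s then -1 else 1)) * x ^ card U"
    by (simp add: prod.distrib)
  also have "(\<Prod>l\<in>U. (if l \<in> s then -1 else 1::real)) = (-1) ^ card (s \<inter> U)"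
  proof -
    have "(\<Prod>l\<in>U. (if l \<in> s then -1 else 1::real)) = (\<Prod>l\<in>U \<inter> s. -1)"
      using assms by (intro prod.mono_neutral_cong_right) auto
    then show ?thesis by (simp add: Int_commute)
  qed
  finally show ?thesis unfolding chi_def by simp
qed

lemma char_sum_formula:
  fixes x :: real
  assumes "s \<subseteq> {..<K}"
  shows "(\<Sum>U\<in>Pow {..<K}. chi s U * x ^ card U) / 2 ^ K
       = ((1 - x) / 2) ^ card s * ((1 + x) / 2) ^ (K - card s)"
proof -
  have fs: "finite s" using assms finite_subset by blast
  have "(\<Sum>U\<in>Pow {..<K}. chi s U * x ^ card U) = (\<Sum>U\<in>Pow {..<K}. (\<Prod>l\<in>U. if l \<in> s then - x else x) * (\<Prod>l\<in>{..<K} - U. 1))"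
  proof (intro sum.cong refl)
    fix U assume "U \<in> Pow {..<K}"
    then have "finite U" by (auto intro: finite_subset)
    then show "chi s U * x ^ card U = (\<Prod>l\<in>U. if l \<in> s then - x else x) * (\<Prod>l\<in>{..<K} - U. 1)"
      using chi_pow[OF _ fs] by simp
  qed
  also have "\<dots> = (\<Prod>l<K. (if l \<in> s then - x else x) + 1)"
    by (rule prod_add[symmetric]) simp
  also have "\<dots> = (\<Prod>l<K. if l \<in> s then 1 - x else 1 + x)"
    by (intro prod.cong) auto
  also have "\<dots> = (1 - x) ^ card s * (1 + x) ^ (K - card s)"
    using prod_if_two[OF assms] by simp
  finally have "(\<Sum>U\<in>Pow {..<K}. chi s U * x ^ card U) = (1 - x) ^ card s * (1 + x) ^ (K - card s)" .
  moreover have "card s \<le> K" using card_mono[OF _ assms] by simp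
  then have "(2::real) ^ K = 2 ^ card s * 2 ^ (K - card s)" by (simp flip: power_add)
  ultimately show ?thesis by (simp add: power_divide)
qed

lemma bij_divmod:
  assumes "(m::nat) > 0"
  shows "bij_betw (\<lambda>I. (I div m, I mod m)) {..<m*m} ({..<m} \<times> {..<m})"
  by (rule bij_betwI[where g = "\<lambda>(i,j). j + i * m"])
     (use assms in \<open>auto simp: pair_div pair_mod less_mult_imp_div_less intro: pair_lt\<close>)

lemma kcopy:
  fixes a b :: "bool list \<Rightarrow> nat \<Rightarrow> real" and D p K n :: nat and lam :: "nat set \<Rightarrow> real"
    and f :: "bool list \<Rightarrow> bool list \<Rightarrow> bool"
  assumes D: "D = 2^p"
  and lam: "\<And>s. s \<subseteq> {..<K} \<Longrightarrow> 0 \<le> lam s \<and> lam s \<le> 1"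
  and na: "\<And>x. length x = n \<Longrightarrow> (\<Sum>i<D. (a x i)\<^sup>2) = 1"
  and nb: "\<And>y. length y = n \<Longrightarrow> (\<Sum>i<D. (b y i)\<^sup>2) = 1"
  and acc: "\<And>x y. length x = n \<Longrightarrow> length y = n \<Longrightarrow>
      (let P = (\<Sum>s\<in>Pow {..<K}. lam s * (((1 - (\<Sum>i<D. a x i * b y i)\<^sup>2) / 2) ^ card s
                 * ((1 + (\<Sum>i<D. a x i * b y i)\<^sup>2) / 2) ^ (K - card s)))
       in if f x y then 2/3 \<le> P else 2/3 \<le> 1 - P)"
  shows "qsmp_protocol n f (K*p) (K*p)"
proof -
  define Fn where "Fn = PiE {..<K} (\<lambda>_. {..<D})"
  have finFn: "finite Fn" unfolding Fn_def by (simp add: finite_PiE)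
  have cardFn: "card Fn = D ^ K" unfolding Fn_def by (simp add: card_PiE)
  obtain e1 where e1: "bij_betw e1 {..<D^K} Fn"
    using ex_bij_betw_nat_finite[OF finFn] cardFn by (auto simp: atLeast0LessThan)
  define m where "m = D ^ K"
  have m0: "m > 0" unfolding m_def D by simp
  have mp: "(2::nat) ^ (K*p) = m" unfolding m_def D by (simp only: power_mult[symmetric] mult.commute)
  have mp2: "(2::nat) ^ (K*p + K*p) = m * m" by (simp only: power_add mp)
  define E where "E I = (e1 (I div m), e1 (I mod m))" for I
  have bE: "bij_betw E {..<m*m} (Fn \<times> Fn)"
  proof -
    have "bij_betw (map_prod e1 e1 \<circ> (\<lambda>I. (I div m, I mod m))) {..<m*m} (Fn \<times> Fn)"
      by (rule bij_betw_trans[OF bij_divmod[OF m0]]) (rule bij_betw_map_prod; use e1 m_def in simp)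
    moreover have "E = (\<lambda>x. (e1 (x div m), e1 (x mod m)))" by (rule ext) (simp add: E_def)
    ultimately show ?thesis by (simp add: o_def)
  qed
  define sw where "sw U z = ((\<lambda>l. if l \<in> U then snd z l else fst z l), (\<lambda>l. if l \<in> U then fst z l else snd z l))"
    for U :: "nat set" and z :: "(nat \<Rightarrow> nat) \<times> (nat \<Rightarrow> nat)"
  have sw_Fn: "sw U z \<in> Fn \<times> Fn" if "z \<in> Fn \<times> Fn" for U z
    using that unfolding sw_def Fn_def by (auto simp: PiE_def Pi_def extensional_def)
  have sw_sw: "sw U (sw T z) = sw (sdiff U T) z" for U T z
    unfolding sw_def sdiff_def by (auto simp: fun_eq_iff)
  have sw_0: "sw {} z = z" for z unfolding sw_def by simp
  have surjE: "E ` {..<m*m} = Fn \<times> Fn" using bE by (simp add: bij_betw_def)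
  have injE: "inj_on E {..<m*m}" using bE by (simp add: bij_betw_def)
  have EI: "E I \<in> Fn \<times> Fn" if "I < m*m" for I using surjE that by blast
  define pi where "pi U I = inv_into {..<m*m} E (sw U (E I))" for U I
  have Epi: "E (pi U I) = sw U (E I)" if "I < m*m" for U I
    unfolding pi_def using that by (intro f_inv_into_f) (simp add: surjE sw_Fn EI)
  have pi_rng: "pi U I < m*m" if "I < m*m" for U I
    unfolding pi_def using inv_into_into[of "sw U (E I)" E "{..<m*m}"] surjE sw_Fn[OF EI[OF that]] by auto
  interpret Z: zgrp "m*m" K pi
  proof
    show "pi U I < m*m" if "U \<subseteq> {..<K}" "I < m*m" for U I using pi_rng that by simp
    show "pi U (pi T I) = pi (sdiff U T) I" if "U \<subseteq> {..<K}" "T \<subseteq> {..<K}" "I < m*m" for U T I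
      unfolding pi_def[of U "pi T I"] pi_def[of "sdiff U T" I] using that by (simp add: Epi sw_sw)
    show "pi {} I = I" if "I < m*m" for I
      unfolding pi_def sw_0 using that injE by (simp add: inv_into_f_f)
  qed
  define Aw where "Aw x g = (\<Prod>l<K. a x (g l))" for x g
  define Bw where "Bw y g = (\<Prod>l<K. b y (g l))" for y g
  define \<rho> where "\<rho> x = mat m m (\<lambda>(i,j). complex_of_real (Aw x (e1 i) * Aw x (e1 j)))" for x
  define \<sigma> where "\<sigma> y = mat m m (\<lambda>(i,j). complex_of_real (Bw y (e1 i) * Bw y (e1 j)))" for y
  have normK: "(\<Sum>i<m. (\<Prod>l<K. c (e1 i l))\<^sup>2) = 1" if c: "(\<Sum>i<D. (c i)\<^sup>2) = (1::real)" for c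
  proof -
    have "(\<Sum>i<m. (\<Prod>l<K. c (e1 i l))\<^sup>2) = (\<Sum>g\<in>Fn. (\<Prod>l<K. c (g l))\<^sup>2)"
      unfolding m_def by (rule sum.reindex_bij_betw[OF e1, where g = "\<lambda>g. (\<Prod>l<K. c (g l))\<^sup>2"])
    also have "\<dots> = (\<Sum>g\<in>Fn. \<Prod>l<K. (c (g l))\<^sup>2)" by (simp add: prod_power_distrib)
    also have "\<dots> = (\<Prod>l<K. \<Sum>j<D. (c j)\<^sup>2)"
      unfolding Fn_def by (rule prod_sum_PiE[symmetric]) auto
    also have "\<dots> = 1" using c by simp
    finally show ?thesis .
  qed
  have densA: "density (2^(K*p)) (\<rho> x)" if "length x = n" for x
    unfolding mp \<rho>_def by (rule density_rank1) (simp add: Aw_def normK na[OF that])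
  have densB: "density (2^(K*p)) (\<sigma> y)" if "length y = n" for y
    unfolding mp \<sigma>_def by (rule density_rank1) (simp add: Bw_def normK nb[OF that])
  have eff: "effect (2^(K*p + K*p)) (Z.MatL lam)"
    unfolding mp2 by (rule Z.effect_MatL) (use lam in auto)
  have val: "Re (mtrace (Z.MatL lam * kron (\<rho> x) (\<sigma> y)))
      = (\<Sum>s\<in>Pow {..<K}. lam s * (((1 - (\<Sum>i<D. a x i * b y i)\<^sup>2) / 2) ^ card s
                 * ((1 + (\<Sum>i<D. a x i * b y i)\<^sup>2) / 2) ^ (K - card s)))"
    if x: "length x = n" and y: "length y = n" for x y
  proof -
    define t where "t = (\<Sum>i<D. a x i * b y i)"
    define Wp where "Wp z = Aw x (fst z) * Bw y (snd z)" for z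
    define W where "W I = Wp (E I)" for I
    have kr: "kron (\<rho> x) (\<sigma> y) = mat (m*m) (m*m) (\<lambda>(I,J). complex_of_real (W I * W J))"
      unfolding \<rho>_def \<sigma>_def W_def Wp_def E_def
      using kron_rank1[OF m0, where A = "\<lambda>i. Aw x (e1 i)" and B = "\<lambda>i. Bw y (e1 i)"] by simp
    have G: "(\<Sum>I<m*m. W (pi U I) * W I) = (t * t) ^ card U" if U: "U \<subseteq> {..<K}" for U
    proof -
      define Fl where "Fl l i j = (if l \<in> U then a x j * b y i * (a x i * b y j) else a x i * b y j * (a x i * b y j))" for l i j
      have "(\<Sum>I<m*m. W (pi U I) * W I) = (\<Sum>I<m*m. Wp (sw U (E I)) * Wp (E I))"
        unfolding W_def by (intro sum.cong refl) (simp add: Epi)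
      also have "\<dots> = (\<Sum>z\<in>Fn \<times> Fn. Wp (sw U z) * Wp z)"
        by (rule sum.reindex_bij_betw[OF bE, where g = "\<lambda>z. Wp (sw U z) * Wp z"])
      also have "\<dots> = (\<Sum>g\<in>Fn. \<Sum>h\<in>Fn. Wp (sw U (g, h)) * Wp (g, h))"
        unfolding sum.cartesian_product by (rule sum.cong) auto
      also have "\<dots> = (\<Sum>g\<in>Fn. \<Sum>h\<in>Fn. \<Prod>l<K. Fl l (g l) (h l))"
        unfolding Wp_def sw_def Aw_def Bw_def Fl_def
        by (intro sum.cong refl) (simp add: prod.distrib[symmetric], intro prod.cong refl, auto)
      also have "\<dots> = (\<Sum>g\<in>Fn. \<Prod>l<K. \<Sum>j<D. Fl l (g l) j)"
        unfolding Fn_def by (intro sum.cong refl) (rule prod_sum_PiE[symmetric]; auto)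
      also have "\<dots> = (\<Prod>l<K. \<Sum>i<D. \<Sum>j<D. Fl l i j)"
        unfolding Fn_def by (rule prod_sum_PiE[symmetric]) auto
      also have "\<dots> = (\<Prod>l<K. if l \<in> U then t * t else 1)"
      proof (intro prod.cong refl)
        fix l
        show "(\<Sum>i<D. \<Sum>j<D. Fl l i j) = (if l \<in> U then t * t else 1)"
        proof (cases "l \<in> U")
          case True
          have "(\<Sum>i<D. \<Sum>j<D. Fl l i j) = (\<Sum>i<D. \<Sum>j<D. (a x i * b y i) * (a x j * b y j))"
            unfolding Fl_def using True by (intro sum.cong refl) (simp add: mult_ac)
          also have "\<dots> = t * t" unfolding t_def by (simp add: sum_product)
          finally show ?thesis using True by simp
        next
          case False
          have "(\<Sum>i<D. \<Sum>j<D. Fl l i j) = (\<Sum>i<D. \<Sum>j<D. (a x i)\<^sup>2 * (b y j)\<^sup>2)"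
            unfolding Fl_def using False by (intro sum.cong refl) (simp add: power2_eq_square mult_ac)
          also have "\<dots> = (\<Sum>i<D. (a x i)\<^sup>2) * (\<Sum>j<D. (b y j)\<^sup>2)" by (simp add: sum_product)
          also have "\<dots> = 1" using na[OF x] nb[OF y] by simp
          finally show ?thesis using False by simp
        qed
      qed
      also have "\<dots> = (t * t) ^ card U" by (rule prod_if_const[OF U])
      finally show ?thesis .
    qed
    have "mtrace (Z.MatL lam * kron (\<rho> x) (\<sigma> y))
        = complex_of_real (\<Sum>s\<in>Pow {..<K}. lam s * (\<Sum>U\<in>Pow {..<K}. chi s U * (\<Sum>I<m*m. W (pi U I) * W I)) / 2 ^ K)"
      unfolding kr by (rule Z.trace_MatL)
    also have "(\<Sum>s\<in>Pow {..<K}. lam s * (\<Sum>U\<in>Pow {..<K}. chi s U * (\<Sum>I<m*m. W (pi U I) * W I)) / 2 ^ K)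
        = (\<Sum>s\<in>Pow {..<K}. lam s * (((1 - t\<^sup>2) / 2) ^ card s * ((1 + t\<^sup>2) / 2) ^ (K - card s)))"
    proof (intro sum.cong refl)
      fix s assume s: "s \<in> Pow {..<K}"
      have "(\<Sum>U\<in>Pow {..<K}. chi s U * (\<Sum>I<m*m. W (pi U I) * W I)) = (\<Sum>U\<in>Pow {..<K}. chi s U * (t\<^sup>2) ^ card U)"
        by (intro sum.cong refl) (simp add: G power2_eq_square)
      then have "(\<Sum>U\<in>Pow {..<K}. chi s U * (\<Sum>I<m*m. W (pi U I) * W I)) / 2 ^ K
          = ((1 - t\<^sup>2) / 2) ^ card s * ((1 + t\<^sup>2) / 2) ^ (K - card s)"
        using char_sum_formula[of s K "t\<^sup>2"] s by simp
      then show "lam s * (\<Sum>U\<in>Pow {..<K}. chi s U * (\<Sum>I<m*m. W (pi U I) * W I)) / 2 ^ K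
          = lam s * (((1 - t\<^sup>2) / 2) ^ card s * ((1 + t\<^sup>2) / 2) ^ (K - card s))"
        by (simp add: times_divide_eq_right[symmetric])
    qed
    finally show ?thesis unfolding t_def by simp
  qed
  show ?thesis
    unfolding qsmp_protocol_def
  proof (intro exI conjI allI impI)
    show "\<And>x. length x = n \<Longrightarrow> density (2^(K*p)) (\<rho> x)" by (rule densA)
    show "\<And>y. length y = n \<Longrightarrow> density (2^(K*p)) (\<sigma> y)" by (rule densB)
    show "effect (2^(K*p + K*p)) (Z.MatL lam)" by (rule eff)
    fix x y :: "bool list" assume x: "length x = n" and y: "length y = n"
    show "let pr = Re (mtrace (Z.MatL lam * kron (\<rho> x) (\<sigma> y))) in if f x y then 2/3 \<le> pr else 2/3 \<le> 1 - pr"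
      unfolding val[OF x y] using acc[OF x y] by simp
  qed
qed

lemma accept_binom:
  fixes q \<tau> :: real and K :: nat
  assumes q: "0 \<le> q" "q \<le> 1"
  shows "(\<Sum>s\<in>Pow {..<K}. (if real (card s) \<le> \<tau> then 1 else 0) * (q ^ card s * (1 - q) ^ (K - card s)))
       = measure_pmf.prob (binomial_pmf K q) {j. real j \<le> \<tau>}"
proof -
  define h where "h j = (if real j \<le> \<tau> then 1 else 0) * (q ^ j * (1 - q) ^ (K - j))" for j :: nat
  have "(\<Sum>s\<in>Pow {..<K}. (if real (card s) \<le> \<tau> then 1 else 0) * (q ^ card s * (1 - q) ^ (K - card s)))
      = (\<Sum>s\<in>Pow {..<K}. h (card s))" unfolding h_def by simp
  also have "\<dots> = (\<Sum>j\<in>{..K}. \<Sum>s\<in>{s\<in>Pow {..<K}. card s = j}. h (card s))"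
    by (rule sum.group[symmetric]) (auto intro: card_mono[of "{..<K}", simplified])
  also have "\<dots> = (\<Sum>j\<in>{..K}. real (K choose j) * h j)"
  proof (intro sum.cong refl)
    fix j
    have "{s\<in>Pow {..<K}. card s = j} = {B. B \<subseteq> {..<K} \<and> card B = j}" by auto
    then have "card {s\<in>Pow {..<K}. card s = j} = K choose j" by (simp add: n_subsets)
    moreover have "(\<Sum>s\<in>{s\<in>Pow {..<K}. card s = j}. h (card s)) = (\<Sum>s\<in>{s\<in>Pow {..<K}. card s = j}. h j)"
      by (intro sum.cong) auto
    ultimately show "(\<Sum>s\<in>{s\<in>Pow {..<K}. card s = j}. h (card s)) = real (K choose j) * h j" by simp
  qed
  also have "\<dots> = measure_pmf.prob (binomial_pmf K q) {j. real j \<le> \<tau>}"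
  proof -
    have sub: "set_pmf (binomial_pmf K q) \<subseteq> {..K}" using q by (auto simp: set_pmf_binomial_eq)
    have "measure_pmf.prob (binomial_pmf K q) {j. real j \<le> \<tau>}
        = measure_pmf.prob (binomial_pmf K q) ({j. real j \<le> \<tau>} \<inter> set_pmf (binomial_pmf K q))"
      by (simp add: measure_Int_set_pmf)
    also have "{j. real j \<le> \<tau>} \<inter> set_pmf (binomial_pmf K q) = ({j. real j \<le> \<tau>} \<inter> {..K}) \<inter> set_pmf (binomial_pmf K q)"
      using sub by auto
    also have "measure_pmf.prob (binomial_pmf K q) \<dots> = measure_pmf.prob (binomial_pmf K q) ({j. real j \<le> \<tau>} \<inter> {..K})"
      by (rule measure_Int_set_pmf)
    also have "\<dots> = sum (pmf (binomial_pmf K q)) ({j. real j \<le> \<tau>} \<inter> {..K})"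
      by (rule measure_measure_pmf_finite) simp
    also have "\<dots> = (\<Sum>j\<in>{..K}. if real j \<le> \<tau> then pmf (binomial_pmf K q) j else 0)"
      by (simp add: sum.inter_restrict Int_commute)
    also have "\<dots> = (\<Sum>j\<in>{..K}. real (K choose j) * h j)"
      unfolding h_def using q by (intro sum.cong refl) (simp add: pmf_binomial mult_ac)
    finally show ?thesis by simp
  qed
  finally show ?thesis .
qed

lemma exp_m2: "exp (-2::real) \<le> 1/3"
proof -
  have "3 \<le> exp (2::real)" using exp_ge_add_one_self[of 2] by simp
  then show ?thesis by (simp add: exp_minus field_simps)
qed

lemma fromvec:
  fixes u v :: "bool list \<Rightarrow> nat \<Rightarrow> real" and q n K :: nat and \<epsilon> :: real
    and f :: "bool list \<Rightarrow> bool list \<Rightarrow> bool"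
  assumes nu: "\<And>x. length x = n \<Longrightarrow> (\<Sum>i<2^q. (u x i)\<^sup>2) = 1"
  and nv: "\<And>y. length y = n \<Longrightarrow> (\<Sum>i<2^q. (v y i)\<^sup>2) = 1"
  and eps: "\<epsilon> > 0"
  and yes: "\<And>x y. length x = n \<Longrightarrow> length y = n \<Longrightarrow> f x y \<Longrightarrow> (\<Sum>i<2^q. u x i * v y i) \<ge> \<epsilon>"
  and no: "\<And>x y. length x = n \<Longrightarrow> length y = n \<Longrightarrow> \<not> f x y \<Longrightarrow> (\<Sum>i<2^q. u x i * v y i) \<le> - \<epsilon>"
  and bnd: "\<And>x y. length x = n \<Longrightarrow> length y = n \<Longrightarrow> \<bar>\<Sum>i<2^q. u x i * v y i\<bar> \<le> 1"
  and K: "real K * \<epsilon>\<^sup>2 \<ge> 16"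
  shows "qsmp_protocol n f (K*(q+1)) (K*(q+1))"
proof -
  define D where "D = (2::nat)^(q+1)"
  have D2: "D = 2^q * 2" unfolding D_def by simp
  define a where "a x k = (if even k then (if k = 0 then 1 else 0) else u x (k div 2)) / sqrt 2" for x k
  define b where "b y k = (if even k then (if k = 0 then 1 else 0) else v y (k div 2)) / sqrt 2" for y k
  have split2: "(\<Sum>k<D. g k) = (\<Sum>i<2^q. g (i * 2) + g (Suc (i * 2)))" for g :: "nat \<Rightarrow> real"
    unfolding D2 sum_mult_product by (simp add: numeral_2_eq_2)
  have pos: "(0::nat) < 2^q" by simp
  have delta0: "(\<Sum>i<(2::nat)^q. (if i = 0 then c else 0)) = c" for c :: real
    using pos by (simp add: sum.delta)
  have na: "(\<Sum>k<D. (a x k)\<^sup>2) = 1" if "length x = n" for x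
  proof -
    have "(\<Sum>k<D. (a x k)\<^sup>2) = (\<Sum>i<2^q. (if i = 0 then 1/2 else 0) + (u x i)\<^sup>2 / 2)"
      unfolding split2 a_def by (intro sum.cong refl) (simp add: power_divide)
    also have "\<dots> = 1/2 + 1/2" by (simp add: sum.distrib delta0 sum_divide_distrib[symmetric] nu[OF that])
    finally show ?thesis by simp
  qed
  have nb: "(\<Sum>k<D. (b y k)\<^sup>2) = 1" if "length y = n" for y
  proof -
    have "(\<Sum>k<D. (b y k)\<^sup>2) = (\<Sum>i<2^q. (if i = 0 then 1/2 else 0) + (v y i)\<^sup>2 / 2)"
      unfolding split2 b_def by (intro sum.cong refl) (simp add: power_divide)
    also have "\<dots> = 1/2 + 1/2" by (simp add: sum.distrib delta0 sum_divide_distrib[symmetric] nv[OF that])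
    finally show ?thesis by simp
  qed
  have inner: "(\<Sum>k<D. a x k * b y k) = 1/2 + (\<Sum>i<2^q. u x i * v y i) / 2" for x y
  proof -
    have "(\<Sum>k<D. a x k * b y k) = (\<Sum>i<2^q. (if i = 0 then 1/2 else 0) + u x i * v y i / 2)"
      unfolding split2 a_def b_def by (intro sum.cong refl) simp
    also have "\<dots> = 1/2 + (\<Sum>i<2^q. u x i * v y i) / 2" by (simp add: sum.distrib delta0 sum_divide_distrib[symmetric])
    finally show ?thesis .
  qed
  define q1 where "q1 = (1 - (1 + \<epsilon>)\<^sup>2 / 4) / 2"
  define q0 where "q0 = (1 - (1 - \<epsilon>)\<^sup>2 / 4) / 2"
  define \<tau> where "\<tau> = real K * (q0 + q1) / 2"
  define lam where "lam s = (if real (card s) \<le> \<tau> then 1 else 0 :: real)" for s :: "nat set"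
  have Kpos: "K > 0" using K eps by (cases K) auto
  have expb: "exp (- 2 * (real K * \<epsilon> / 4)\<^sup>2 / real K) \<le> 1/3"
  proof -
    have "- 2 * (real K * \<epsilon> / 4)\<^sup>2 / real K = - (real K * \<epsilon>\<^sup>2) / 8"
      using Kpos by (simp add: power2_eq_square field_simps)
    also have "\<dots> \<le> -2" using K by simp
    finally show ?thesis using exp_m2 by (meson exp_le_cancel_iff order_trans)
  qed
  show ?thesis
  proof (rule kcopy[where D = D and a = a and b = b and lam = lam])
    show "D = 2 ^ (q + 1)" by (simp add: D_def)
    show "\<And>s. s \<subseteq> {..<K} \<Longrightarrow> 0 \<le> lam s \<and> lam s \<le> 1" by (simp add: lam_def)
    show "\<And>x. length x = n \<Longrightarrow> (\<Sum>i<D. (a x i)\<^sup>2) = 1" by (rule na)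
    show "\<And>y. length y = n \<Longrightarrow> (\<Sum>i<D. (b y i)\<^sup>2) = 1" by (rule nb)
    fix x y :: "bool list" assume x: "length x = n" and y: "length y = n"
    define w where "w = (\<Sum>i<2^q. u x i * v y i)"
    define t where "t = 1/2 + w/2"
    define qv where "qv = (1 - t\<^sup>2) / 2"
    have tD: "(\<Sum>i<D. a x i * b y i) = t" unfolding t_def w_def by (rule inner)
    have w1: "\<bar>w\<bar> \<le> 1" unfolding w_def by (rule bnd[OF x y])
    have t01: "0 \<le> t" "t \<le> 1" using w1 unfolding t_def by auto
    have t2: "0 \<le> t\<^sup>2" "t\<^sup>2 \<le> 1" using t01 by (auto simp: power_le_one)
    have qv0: "0 \<le> qv" unfolding qv_def using t2(2) by simp
    have "qv \<le> 1/2" unfolding qv_def by simp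
    then have qv1: "qv \<le> 1" by linarith
    note qv01 = qv0 qv1
    have bd: "binomial_distribution qv" by unfold_locales (use qv01 in auto)
    have P: "(\<Sum>s\<in>Pow {..<K}. lam s * (((1 - (\<Sum>i<D. a x i * b y i)\<^sup>2) / 2) ^ card s
                 * ((1 + (\<Sum>i<D. a x i * b y i)\<^sup>2) / 2) ^ (K - card s)))
         = measure_pmf.prob (binomial_pmf K qv) {j. real j \<le> \<tau>}"
    proof -
      have "(\<Sum>s\<in>Pow {..<K}. lam s * (((1 - (\<Sum>i<D. a x i * b y i)\<^sup>2) / 2) ^ card s
                 * ((1 + (\<Sum>i<D. a x i * b y i)\<^sup>2) / 2) ^ (K - card s)))
          = (\<Sum>s\<in>Pow {..<K}. (if real (card s) \<le> \<tau> then 1 else 0) * (qv ^ card s * (1 - qv) ^ (K - card s)))"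
        unfolding tD lam_def qv_def by (intro sum.cong refl) (simp add: field_simps)
      also have "\<dots> = measure_pmf.prob (binomial_pmf K qv) {j. real j \<le> \<tau>}"
        by (rule accept_binom) (use qv01 in auto)
      finally show ?thesis .
    qed
    have main: "if f x y then 2/3 \<le> measure_pmf.prob (binomial_pmf K qv) {j. real j \<le> \<tau>}
       else 2/3 \<le> 1 - measure_pmf.prob (binomial_pmf K qv) {j. real j \<le> \<tau>}"
    proof (cases "f x y")
      case True
      have "w \<ge> \<epsilon>" using yes[OF x y True] by (simp add: w_def)
      then have "t \<ge> (1 + \<epsilon>) / 2" unfolding t_def by simp
      then have "t\<^sup>2 \<ge> ((1 + \<epsilon>) / 2)\<^sup>2" using eps by (intro power_mono) auto
      then have "qv \<le> q1" unfolding qv_def q1_def by (simp add: power_divide)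
      moreover have "q0 - q1 = \<epsilon> / 2" unfolding q0_def q1_def by (simp add: power2_eq_square field_simps)
      ultimately have "\<tau> \<ge> real K * qv + real K * \<epsilon> / 4"
      proof -
        assume a: "qv \<le> q1" "q0 - q1 = \<epsilon> / 2"
        have q0e: "q0 = q1 + \<epsilon>/2" using a(2) by linarith
        have "\<tau> = real K * q1 + real K * \<epsilon> / 4" unfolding \<tau>_def q0e by (simp add: field_simps)
        moreover have "real K * qv \<le> real K * q1" using a(1) by (simp add: mult_left_mono)
        ultimately show ?thesis by linarith
      qed
      then have sub: "UNIV - {j. real j \<le> \<tau>} \<subseteq> {j. real j \<ge> real K * qv + real K * \<epsilon> / 4}" by auto
      have "measure_pmf.prob (binomial_pmf K qv) (UNIV - {j. real j \<le> \<tau>})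
          \<le> measure_pmf.prob (binomial_pmf K qv) {j. real j \<ge> real K * qv + real K * \<epsilon> / 4}"
        by (rule measure_pmf.finite_measure_mono[OF sub]) simp
      also have "\<dots> \<le> exp (- 2 * (real K * \<epsilon> / 4)\<^sup>2 / real K)"
        by (rule binomial_distribution.prob_ge[OF bd Kpos]) (use eps in simp)
      also have "\<dots> \<le> 1/3" by (rule expb)
      finally have "measure_pmf.prob (binomial_pmf K qv) (UNIV - {j. real j \<le> \<tau>}) \<le> 1/3" .
      moreover have "measure_pmf.prob (binomial_pmf K qv) (UNIV - {j. real j \<le> \<tau>})
          = 1 - measure_pmf.prob (binomial_pmf K qv) {j. real j \<le> \<tau>}"
        using measure_pmf.prob_compl[of "{j. real j \<le> \<tau>}" "binomial_pmf K qv"] by simp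
      ultimately show ?thesis using True by simp
    next
      case False
      have "w \<le> - \<epsilon>" using no[OF x y False] by (simp add: w_def)
      then have "t \<le> (1 - \<epsilon>) / 2" unfolding t_def by simp
      then have "t\<^sup>2 \<le> ((1 - \<epsilon>) / 2)\<^sup>2" using t01 by (intro power_mono) auto
      then have "qv \<ge> q0" unfolding qv_def q0_def by (simp add: power_divide)
      moreover have "q0 - q1 = \<epsilon> / 2" unfolding q0_def q1_def by (simp add: power2_eq_square field_simps)
      ultimately have "\<tau> \<le> real K * qv - real K * \<epsilon> / 4"
      proof -
        assume a: "qv \<ge> q0" "q0 - q1 = \<epsilon> / 2"
        have q1e: "q1 = q0 - \<epsilon>/2" using a(2) by linarith
        have "\<tau> = real K * q0 - real K * \<epsilon> / 4" unfolding \<tau>_def q1e by (simp add: field_simps)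
        moreover have "real K * q0 \<le> real K * qv" using a(1) by (simp add: mult_left_mono)
        ultimately show ?thesis by linarith
      qed
      then have sub: "{j. real j \<le> \<tau>} \<subseteq> {j. real j \<le> real K * qv - real K * \<epsilon> / 4}" by auto
      have "measure_pmf.prob (binomial_pmf K qv) {j. real j \<le> \<tau>}
          \<le> measure_pmf.prob (binomial_pmf K qv) {j. real j \<le> real K * qv - real K * \<epsilon> / 4}"
        by (rule measure_pmf.finite_measure_mono[OF sub]) simp
      also have "\<dots> \<le> exp (- 2 * (real K * \<epsilon> / 4)\<^sup>2 / real K)"
        by (rule binomial_distribution.prob_le[OF bd Kpos]) (use eps in simp)
      also have "\<dots> \<le> 1/3" by (rule expb)
      finally show ?thesis using False by simp
    qed
    then show "let P = (\<Sum>s\<in>Pow {..<K}. lam s * (((1 - (\<Sum>i<D. a x i * b y i)\<^sup>2) / 2) ^ card s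
                 * ((1 + (\<Sum>i<D. a x i * b y i)\<^sup>2) / 2) ^ (K - card s)))
       in if f x y then 2/3 \<le> P else 2/3 \<le> 1 - P"
      unfolding Let_def P .
  qed
qed

lemma map_pmf_mem_bernoulli:
  "map_pmf (\<lambda>z. z \<in> E) P = bernoulli_pmf (measure_pmf.prob P E)"
proof (rule pmf_eqI)
  fix b :: bool
  have q: "measure_pmf.prob P E \<in> {0..1}" by auto
  show "pmf (map_pmf (\<lambda>z. z \<in> E) P) b = pmf (bernoulli_pmf (measure_pmf.prob P E)) b"
  proof (cases b)
    case True
    have "(\<lambda>z. z \<in> E) -` {True} = E" by auto
    then show ?thesis using True q by (simp add: pmf_map)
  next
    case False
    have "(\<lambda>z. z \<in> E) -` {False} = UNIV - E" by auto
    then show ?thesis using False q measure_pmf.prob_compl[of E P] by (simp add: pmf_map)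
  qed
qed

lemma count_binomial:
  "map_pmf (\<lambda>g. card {i\<in>{..<N}. g i \<in> E}) (Pi_pmf {..<N} d (\<lambda>_. P))
     = binomial_pmf N (measure_pmf.prob P E)"
proof -
  have "map_pmf (\<lambda>g. card {i\<in>{..<N}. g i \<in> E}) (Pi_pmf {..<N} d (\<lambda>_. P))
      = map_pmf (\<lambda>h. card {i\<in>{..<N}. h i}) (map_pmf ((\<circ>) (\<lambda>z. z \<in> E)) (Pi_pmf {..<N} d (\<lambda>_. P)))"
    by (simp add: pmf.map_comp o_def)
  also have "map_pmf ((\<circ>) (\<lambda>z. z \<in> E)) (Pi_pmf {..<N} d (\<lambda>_. P))
      = Pi_pmf {..<N} (d \<in> E) (\<lambda>_. map_pmf (\<lambda>z. z \<in> E) P)"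
    by (rule Pi_pmf_map[symmetric]) auto
  also have "\<dots> = Pi_pmf {..<N} (d \<in> E) (\<lambda>_. bernoulli_pmf (measure_pmf.prob P E))"
    by (simp add: map_pmf_mem_bernoulli)
  also have "map_pmf (\<lambda>h. card {i\<in>{..<N}. h i}) \<dots> = binomial_pmf N (measure_pmf.prob P E)"
    by (rule binomial_pmf_altdef'[symmetric]) auto
  finally show ?thesis .
qed

lemma count_tail:
  assumes "N > 0" "e \<ge> 0"
  shows "measure_pmf.prob (Pi_pmf {..<N} d (\<lambda>_. P))
           {g. real (card {i\<in>{..<N}. g i \<in> E}) \<le> real N * measure_pmf.prob P E - e}
         \<le> exp (-2 * e\<^sup>2 / N)"
proof -
  have bd: "binomial_distribution (measure_pmf.prob P E)"
    by unfold_locales auto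
  have "measure_pmf.prob (Pi_pmf {..<N} d (\<lambda>_. P))
           {g. real (card {i\<in>{..<N}. g i \<in> E}) \<le> real N * measure_pmf.prob P E - e}
      = measure_pmf.prob (map_pmf (\<lambda>g. card {i\<in>{..<N}. g i \<in> E}) (Pi_pmf {..<N} d (\<lambda>_. P)))
           {x. real x \<le> real N * measure_pmf.prob P E - e}"
    by (simp add: vimage_def)
  also have "\<dots> = measure_pmf.prob (binomial_pmf N (measure_pmf.prob P E))
           {x. real x \<le> real N * measure_pmf.prob P E - e}"
    by (simp only: count_binomial)
  also have "\<dots> \<le> exp (-2 * e\<^sup>2 / N)"
    by (rule binomial_distribution.prob_le[OF bd assms])
  finally show ?thesis .
qed

lemma newman2:
  fixes Q :: "'a pmf" and G :: "'p \<Rightarrow> 'a set"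
  assumes N: "N > 0" and fin: "finite Ps"
    and good: "\<And>p. p \<in> Ps \<Longrightarrow> measure_pmf.prob Q (G p) \<ge> 2/3"
    and small: "real (card Ps) * exp (- real N / 72) < 1"
  shows "\<exists>T \<in> set_pmf (Pi_pmf {..<N} d (\<lambda>_. Q)).
           \<forall>p\<in>Ps. real (card {i\<in>{..<N}. T i \<in> G p}) > 7/12 * real N"
proof -
  define M where "M = Pi_pmf {..<N} d (\<lambda>_. Q)"
  define B where "B p = {T. real (card {i\<in>{..<N}. T i \<in> G p}) \<le> real N * measure_pmf.prob Q (G p) - real N / 12}" for p
  have bB: "measure_pmf.prob M (B p) \<le> exp (- real N / 72)" for p
  proof -
    have "measure_pmf.prob M (B p) \<le> exp (-2 * (real N / 12)\<^sup>2 / N)"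
      unfolding M_def B_def by (rule count_tail) (use N in auto)
    also have "-2 * (real N / 12)\<^sup>2 / N = - real N / 72"
      using N by (simp add: power2_eq_square field_simps)
    finally show ?thesis .
  qed
  have "measure_pmf.prob M (\<Union>p\<in>Ps. B p) \<le> (\<Sum>p\<in>Ps. measure_pmf.prob M (B p))"
    by (rule measure_pmf.finite_measure_subadditive_finite) (use fin in auto)
  also have "\<dots> \<le> (\<Sum>p\<in>Ps. exp (- real N / 72))"
    by (rule sum_mono) (rule bB)
  also have "\<dots> < 1" using small by simp
  finally have lt: "measure_pmf.prob M (\<Union>p\<in>Ps. B p) < 1" .
  have "measure_pmf.prob M (UNIV - (\<Union>p\<in>Ps. B p)) = 1 - measure_pmf.prob M (\<Union>p\<in>Ps. B p)"
    using measure_pmf.prob_compl[of "\<Union>p\<in>Ps. B p" M] by simp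
  with lt have "measure_pmf.prob M (UNIV - (\<Union>p\<in>Ps. B p)) \<noteq> 0" by simp
  then have "set_pmf M \<inter> (UNIV - (\<Union>p\<in>Ps. B p)) \<noteq> {}"
    by (simp add: measure_pmf_zero_iff)
  then obtain T where T: "T \<in> set_pmf M" "\<And>p. p \<in> Ps \<Longrightarrow> T \<notin> B p" by blast
  show ?thesis
  proof (rule bexI[of _ T])
    show "T \<in> set_pmf (Pi_pmf {..<N} d (\<lambda>_. Q))" using T(1) by (simp add: M_def)
    show "\<forall>p\<in>Ps. real (card {i\<in>{..<N}. T i \<in> G p}) > 7/12 * real N"
    proof
      fix p assume p: "p \<in> Ps"
      have "real (card {i\<in>{..<N}. T i \<in> G p}) > real N * measure_pmf.prob Q (G p) - real N / 12"
        using T(2)[OF p] by (simp add: B_def)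
      moreover have "real N * measure_pmf.prob Q (G p) \<ge> real N * (2/3)"
        using good[OF p] by (intro mult_left_mono) auto
      moreover have "real N > 0" using N by simp
      ultimately show "real (card {i\<in>{..<N}. T i \<in> G p}) > 7/12 * real N" by linarith
    qed
  qed
qed

lemma sum_sign:
  "(\<Sum>i<N. if P i then 1 else -1 :: real) = 2 * real (card {i\<in>{..<N}. P i}) - real N"
proof -
  have "(\<Sum>i<N. if P i then 1 else -1 :: real) = (\<Sum>i<N. 2 * (if P i then 1 else 0) - 1)"
    by (intro sum.cong) auto
  also have "\<dots> = 2 * (\<Sum>i<N. if P i then 1 else 0) - real N"
    by (simp add: sum_subtractf sum_distrib_left)
  also have "(\<Sum>i<N. if P i then 1 else 0 :: real) = real (card {i\<in>{..<N}. P i})"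
    by (simp add: sum.inter_filter[symmetric])
  finally show ?thesis .
qed

lemma card_bool_lists: "card {x :: bool list. length x = n} = 2 ^ n"
  using card_lists_length_eq[of "UNIV :: bool set" n] by simp

lemma finite_bool_lists: "finite {x :: bool list. length x = n}"
  using finite_lists_length_eq[of "UNIV :: bool set" n] by simp

lemma oneway_exists:
  fixes f :: "bool list \<Rightarrow> bool list \<Rightarrow> bool"
  shows "oneway_pub_protocol n f n"
  unfolding oneway_pub_protocol_def
proof (intro exI[of _ "return_pmf ((\<lambda>x::bool list. x), (\<lambda>(y::bool list) (m::bool list). f m y))"] conjI allI impI ballI)
  fix ab and x :: "bool list" assume "ab \<in> set_pmf (return_pmf ((\<lambda>x::bool list. x), (\<lambda>(y::bool list) (m::bool list). f m y)))" "length x = n"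
  then show "length (fst ab x) = n" by simp
next
  fix x y :: "bool list"
  have "measure_pmf.prob (return_pmf ((\<lambda>x::bool list. x), (\<lambda>(y::bool list) (m::bool list). f m y))) {(a, b). b y (a x) = f x y} = 1"
    by (simp add: measure_return)
  then show "2/3 \<le> measure_pmf.prob (return_pmf ((\<lambda>x::bool list. x), (\<lambda>(y::bool list) (m::bool list). f m y))) {(a, b). b y (a x) = f x y}"
    by simp
qed

lemma main_bound:
  fixes f :: "bool list \<Rightarrow> bool list \<Rightarrow> bool" and n :: nat
  assumes n2: "n \<ge> 2"
  shows "real (Qpar n f) \<le> 15000 * 2 ^ (2 * R1pub n f) * log 2 (real n)"
proof -
  define c where "c = R1pub n f"
  have "oneway_pub_protocol n f c"
    unfolding c_def R1pub_def by (rule LeastI[OF oneway_exists])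
  then obtain P :: "((bool list \<Rightarrow> bool list) \<times> (bool list \<Rightarrow> bool list \<Rightarrow> bool)) pmf" where P1: "\<forall>ab\<in>set_pmf P. \<forall>x. length x = n \<longrightarrow> length (fst ab x) = c"
    and P2: "\<forall>x y. length x = n \<longrightarrow> length y = n \<longrightarrow> 2/3 \<le> measure_pmf.prob P {(a, b). b y (a x) = f x y}"
    unfolding oneway_pub_protocol_def by blast
  have Plen: "\<And>ab x. ab \<in> set_pmf P \<Longrightarrow> length x = n \<Longrightarrow> length (fst ab x) = c" using P1 by blast
  have Pok: "\<And>x y. length x = n \<Longrightarrow> length y = n \<Longrightarrow> measure_pmf.prob P {(a, b). b y (a x) = f x y} \<ge> 2/3"
    using P2 by blast
  have npos: "real n > 0" using n2 by simp
  have lg1: "log 2 (real n) \<ge> 1"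
  proof -
    have "log 2 (real n) \<ge> log 2 2" using n2 by (subst log_le_cancel_iff) auto
    then show ?thesis by simp
  qed
  define L0 where "L0 = nat \<lceil>log 2 (real n)\<rceil>"
  have L0ge: "real L0 \<ge> log 2 (real n)" unfolding L0_def by linarith
  have L0le: "real L0 \<le> log 2 (real n) + 1" unfolding L0_def using lg1 by linarith
  have nL0: "real n \<le> 2 ^ L0"
  proof -
    have "real n = 2 powr (log 2 (real n))" using npos by simp
    also have "\<dots> \<le> 2 powr (real L0)" using L0ge by (intro powr_mono) auto
    also have "\<dots> = 2 ^ L0" by (simp add: powr_realpow)
    finally show ?thesis .
  qed
  define L where "L = L0 + 9"
  define N where "N = (2::nat) ^ L"
  have Npos: "N > 0" unfolding N_def by simp
  have NL: "real N \<ge> 512 * real n"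
  proof -
    have "real N = 512 * 2 ^ L0" unfolding N_def L_def by (simp add: power_add)
    then show ?thesis using nL0 by simp
  qed
  define Ps where "Ps = {x :: bool list. length x = n} \<times> {y :: bool list. length y = n}"
  have finPs: "finite Ps" unfolding Ps_def using finite_bool_lists by simp
  have cardPs: "card Ps = 4 ^ n"
    unfolding Ps_def by (simp add: card_cartesian_product card_bool_lists power_mult_distrib[symmetric])
  have small: "real (card Ps) * exp (- real N / 72) < 1"
  proof -
    have "exp (7 * real n) \<le> exp (real N / 72)" using NL by simp
    moreover have "exp (7 * real n) = exp 7 ^ n" by (simp add: exp_of_nat_mult[symmetric] mult.commute)
    moreover have "(8::real) ^ n \<le> exp 7 ^ n"
      using exp_ge_add_one_self[of 7] by (intro power_mono) auto
    moreover have "(4::real) ^ n < 8 ^ n" using n2 by (intro power_strict_mono) auto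
    ultimately have "(4::real) ^ n < exp (real N / 72)" by linarith
    then show ?thesis unfolding cardPs by (simp add: exp_minus field_simps)
  qed
  define A :: "bool list \<times> bool list \<Rightarrow> ((bool list \<Rightarrow> bool list) \<times> (bool list \<Rightarrow> bool list \<Rightarrow> bool)) set"
    where "A p = {(a, b). b (snd p) (a (fst p)) = f (fst p) (snd p)}" for p
  obtain T where Tset: "T \<in> set_pmf (Pi_pmf {..<N} undefined (\<lambda>_. P))"
    and Tcnt: "\<And>p. p \<in> Ps \<Longrightarrow> real (card {i\<in>{..<N}. T i \<in> A p}) > 7/12 * real N"
  proof -
    have "\<exists>T \<in> set_pmf (Pi_pmf {..<N} undefined (\<lambda>_. P)). \<forall>p\<in>Ps. real (card {i\<in>{..<N}. T i \<in> A p}) > 7/12 * real N"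
    proof (rule newman2[OF Npos finPs _ small])
      fix p assume "p \<in> Ps"
      then show "measure_pmf.prob P (A p) \<ge> 2/3" unfolding Ps_def A_def using Pok by (cases p) auto
    qed
    then show ?thesis using that by blast
  qed
  have TP: "T i \<in> set_pmf P" if "i < N" for i
    using Tset that by (auto simp: set_Pi_pmf PiE_dflt_def)
  define Msgs where "Msgs = {m :: bool list. length m = c}"
  have finM: "finite Msgs" unfolding Msgs_def by (rule finite_bool_lists)
  have cardM: "card Msgs = 2 ^ c" unfolding Msgs_def by (rule card_bool_lists)
  define S where "S = {..<N} \<times> Msgs"
  have finS: "finite S" unfolding S_def using finM by simp
  have cardS: "card S = 2 ^ (L + c)" unfolding S_def using cardM by (simp add: card_cartesian_product N_def power_add)
  obtain g where g: "bij_betw g {..<(2::nat) ^ (L + c)} S"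
    using ex_bij_betw_nat_finite[OF finS] cardS by (auto simp: atLeast0LessThan)
  define sN where "sN = sqrt (real N)"
  define sM where "sM = sqrt ((2::real) ^ c)"
  have sN2: "sN * sN = real N" unfolding sN_def by simp
  have sM2: "sM * sM = 2 ^ c" unfolding sM_def by simp
  have sNpos: "sN > 0" unfolding sN_def using Npos by simp
  have sM1: "sM \<ge> 1" unfolding sM_def by simp
  define U where "U x z = (if snd z = fst (T (fst z)) x then 1 else 0) / sN" for x and z :: "nat \<times> bool list"
  define V where "V y z = (if snd (T (fst z)) y (snd z) then 1 else -1) / (sN * sM)" for y and z :: "nat \<times> bool list"
  define u where "u x k = U x (g k)" for x k
  define v where "v y k = V y (g k)" for y k
  have sumS: "(\<Sum>k<2 ^ (L + c). F (g k)) = (\<Sum>i<N. \<Sum>m\<in>Msgs. F (i, m))" for F :: "nat \<times> bool list \<Rightarrow> real"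
  proof -
    have "(\<Sum>k<2 ^ (L + c). F (g k)) = (\<Sum>z\<in>S. F z)" by (rule sum.reindex_bij_betw[OF g])
    also have "\<dots> = (\<Sum>i<N. \<Sum>m\<in>Msgs. F (i, m))"
      unfolding S_def sum.cartesian_product by (rule sum.cong) auto
    finally show ?thesis .
  qed
  have msg: "fst (T i) x \<in> Msgs" if "i < N" "length x = n" for i x
    unfolding Msgs_def using Plen[OF TP[OF that(1)] that(2)] by simp
  have nu: "(\<Sum>k<2 ^ (L + c). (u x k)\<^sup>2) = 1" if x: "length x = n" for x
  proof -
    have "(\<Sum>k<2 ^ (L + c). (u x k)\<^sup>2) = (\<Sum>i<N. \<Sum>m\<in>Msgs. (U x (i, m))\<^sup>2)"
      unfolding u_def by (rule sumS)
    also have "\<dots> = (\<Sum>i<N. \<Sum>m\<in>Msgs. if m = fst (T i) x then 1 / real N else 0)"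
      unfolding U_def by (intro sum.cong refl) (simp add: power_divide power2_eq_square sN2)
    also have "\<dots> = (\<Sum>i<N. 1 / real N)"
      using msg[OF _ x] finM by (intro sum.cong refl) (simp add: sum.delta)
    also have "\<dots> = 1" using Npos by simp
    finally show ?thesis .
  qed
  have nv: "(\<Sum>k<2 ^ (L + c). (v y k)\<^sup>2) = 1" for y
  proof -
    have "(\<Sum>k<2 ^ (L + c). (v y k)\<^sup>2) = (\<Sum>i<N. \<Sum>m\<in>Msgs. (V y (i, m))\<^sup>2)"
      unfolding v_def by (rule sumS)
    also have "\<dots> = (\<Sum>i<N. \<Sum>m\<in>Msgs. 1 / (real N * 2 ^ c))"
      unfolding V_def by (intro sum.cong refl) (simp add: power_divide power2_eq_square sN2 sM2 mult_ac)
    also have "\<dots> = 1" using Npos by (simp add: cardM)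
    finally show ?thesis .
  qed
  define sg where "sg x y i = (if snd (T i) y (fst (T i) x) then 1 else -1 :: real)" for x y i
  have inner: "(\<Sum>k<2 ^ (L + c). u x k * v y k) = (\<Sum>i<N. sg x y i) / (real N * sM)" if x: "length x = n" for x y
  proof -
    have "(\<Sum>k<2 ^ (L + c). u x k * v y k) = (\<Sum>i<N. \<Sum>m\<in>Msgs. U x (i, m) * V y (i, m))"
      unfolding u_def v_def by (rule sumS)
    also have "\<dots> = (\<Sum>i<N. \<Sum>m\<in>Msgs. if m = fst (T i) x then sg x y i / (real N * sM) else 0)"
      unfolding U_def V_def sg_def by (intro sum.cong refl) (auto simp: sN2[symmetric] field_simps)
    also have "\<dots> = (\<Sum>i<N. sg x y i / (real N * sM))"
      using msg[OF _ x] finM by (intro sum.cong refl) (simp add: sum.delta)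
    also have "\<dots> = (\<Sum>i<N. sg x y i) / (real N * sM)" by (simp add: sum_divide_distrib)
    finally show ?thesis .
  qed
  have sgsum: "(\<Sum>i<N. sg x y i) = 2 * real (card {i\<in>{..<N}. snd (T i) y (fst (T i) x)}) - real N" for x y
    unfolding sg_def by (rule sum_sign)
  have sgsum': "(\<Sum>i<N. sg x y i) = real N - 2 * real (card {i\<in>{..<N}. \<not> snd (T i) y (fst (T i) x)})" for x y
  proof -
    have "(\<Sum>i<N. sg x y i) = - (\<Sum>i<N. if \<not> snd (T i) y (fst (T i) x) then 1 else -1 :: real)"
      unfolding sg_def by (simp only: sum_negf[symmetric]) (intro sum.cong refl, simp)
    then show ?thesis by (simp add: sum_sign)
  qed
  have Aiff: "(T i \<in> A (x, y)) = (snd (T i) y (fst (T i) x) = f x y)" for i x y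
    unfolding A_def by (cases "T i") auto
  define \<epsilon> where "\<epsilon> = 1 / (6 * sM)"
  define K :: nat where "K = 576 * 2 ^ c"
  have NsM: "real N * sM > 0" using Npos sM1 by simp
  have epos: "\<epsilon> > 0" unfolding \<epsilon>_def using sM1 by simp
  have Keps: "16 \<le> real K * \<epsilon>\<^sup>2"
  proof -
    have e2: "\<epsilon>\<^sup>2 = 1 / (36 * (sM * sM))" unfolding \<epsilon>_def by (simp add: power2_eq_square)
    have "real K * \<epsilon>\<^sup>2 = 16" unfolding e2 sM2 K_def by simp
    then show ?thesis by simp
  qed
  have yesf: "(\<Sum>i<2 ^ (L + c). u x i * v y i) \<ge> \<epsilon>"
    if x: "length x = n" and y: "length y = n" and fxy: "f x y" for x y
  proof -
    have xy: "(x, y) \<in> Ps" unfolding Ps_def using x y by simp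
    have "{i\<in>{..<N}. T i \<in> A (x, y)} = {i\<in>{..<N}. snd (T i) y (fst (T i) x)}"
    proof (rule Collect_cong)
      fix i show "(i \<in> {..<N} \<and> T i \<in> A (x, y)) = (i \<in> {..<N} \<and> snd (T i) y (fst (T i) x))"
        using Aiff[of i x y] fxy by blast
    qed
    then have "real (card {i\<in>{..<N}. snd (T i) y (fst (T i) x)}) > 7/12 * real N" using Tcnt[OF xy] by simp
    then have "(\<Sum>i<N. sg x y i) \<ge> real N / 6" unfolding sgsum by simp
    then have "(\<Sum>i<N. sg x y i) / (real N * sM) \<ge> (real N / 6) / (real N * sM)"
      using NsM by (rule divide_right_mono[OF _ less_imp_le])
    also have "(real N / 6) / (real N * sM) = \<epsilon>" unfolding \<epsilon>_def using Npos by simp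
    finally show ?thesis unfolding inner[OF x] .
  qed
  have nof: "(\<Sum>i<2 ^ (L + c). u x i * v y i) \<le> - \<epsilon>"
    if x: "length x = n" and y: "length y = n" and fxy: "\<not> f x y" for x y
  proof -
    have xy: "(x, y) \<in> Ps" unfolding Ps_def using x y by simp
    have "{i\<in>{..<N}. T i \<in> A (x, y)} = {i\<in>{..<N}. \<not> snd (T i) y (fst (T i) x)}"
    proof (rule Collect_cong)
      fix i show "(i \<in> {..<N} \<and> T i \<in> A (x, y)) = (i \<in> {..<N} \<and> \<not> snd (T i) y (fst (T i) x))"
        using Aiff[of i x y] fxy by blast
    qed
    then have "real (card {i\<in>{..<N}. \<not> snd (T i) y (fst (T i) x)}) > 7/12 * real N" using Tcnt[OF xy] by simp
    then have "(\<Sum>i<N. sg x y i) \<le> - (real N / 6)" unfolding sgsum' by simp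
    then have "(\<Sum>i<N. sg x y i) / (real N * sM) \<le> - (real N / 6) / (real N * sM)"
      using NsM by (rule divide_right_mono[OF _ less_imp_le])
    also have "- (real N / 6) / (real N * sM) = - \<epsilon>" unfolding \<epsilon>_def using Npos by simp
    finally show ?thesis unfolding inner[OF x] .
  qed
  have bndf: "\<bar>\<Sum>i<2 ^ (L + c). u x i * v y i\<bar> \<le> 1"
    if x: "length x = n" and y: "length y = n" for x y
  proof -
    have "\<bar>\<Sum>i<N. sg x y i\<bar> \<le> (\<Sum>i<N. \<bar>sg x y i\<bar>)" by (rule sum_abs)
    also have "\<dots> = (\<Sum>i<N. (1::real))" unfolding sg_def by (intro sum.cong refl) simp
    also have "\<dots> = real N" by simp
    finally have s1: "\<bar>\<Sum>i<N. sg x y i\<bar> \<le> real N" .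
    have "\<bar>(\<Sum>i<N. sg x y i) / (real N * sM)\<bar> = \<bar>\<Sum>i<N. sg x y i\<bar> / (real N * sM)"
      using NsM by (simp add: abs_divide)
    also have "\<dots> \<le> real N / (real N * sM)" using s1 NsM by (rule divide_right_mono[OF _ less_imp_le])
    also have "\<dots> = 1 / sM" using Npos by simp
    also have "\<dots> \<le> 1" using sM1 by simp
    finally show ?thesis unfolding inner[OF x] .
  qed
  have q: "qsmp_protocol n f (K * (L + c + 1)) (K * (L + c + 1))"
    by (rule fromvec[where u = u and v = v and \<epsilon> = \<epsilon>, OF nu nv epos yesf nof bndf Keps])
  have Qle: "Qpar n f \<le> K * (L + c + 1) + K * (L + c + 1)"
    unfolding Qpar_def by (rule Least_le) (use q in blast)
  have cpow: "real c + 12 \<le> 13 * 2 ^ c"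
  proof -
    have "c < 2 ^ c" by (rule less_exp)
    then have "real c \<le> real (2 ^ c)" by (simp only: of_nat_le_iff less_imp_le)
    then have "real c \<le> 2 ^ c" by simp
    moreover have "(1::real) \<le> 2 ^ c" by simp
    ultimately show ?thesis by linarith
  qed
  have ell: "real L0 + 10 + real c \<le> 13 * 2 ^ c * log 2 (real n)"
  proof -
    have "real L0 + 10 + real c \<le> log 2 (real n) + (11 + real c)" using L0le by simp
    also have "\<dots> \<le> log 2 (real n) + (11 + real c) * log 2 (real n)"
      using lg1 by (intro add_left_mono) (simp add: mult_le_cancel_left1)
    also have "\<dots> = (real c + 12) * log 2 (real n)" by (simp add: algebra_simps)
    also have "\<dots> \<le> 13 * 2 ^ c * log 2 (real n)" using cpow lg1 by (intro mult_right_mono) auto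
    finally show ?thesis .
  qed
  have "real (Qpar n f) \<le> real (K * (L + c + 1) + K * (L + c + 1))" using Qle by linarith
  also have "\<dots> = 1152 * 2 ^ c * (real L0 + 10 + real c)" unfolding K_def L_def by (simp add: algebra_simps)
  also have "\<dots> \<le> 1152 * 2 ^ c * (13 * 2 ^ c * log 2 (real n))"
    using ell by (intro mult_left_mono) auto
  also have "\<dots> = 14976 * (2 ^ c * 2 ^ c) * log 2 (real n)" by simp
  also have "\<dots> \<le> 15000 * (2 ^ c * 2 ^ c) * log 2 (real n)"
    using lg1 by (intro mult_right_mono) auto
  also have "(2::real) ^ c * 2 ^ c = 2 ^ (2 * c)" by (simp add: mult_2 power_add)
  finally show ?thesis unfolding c_def .
qed

theorem mainTheorem2:
  "\<exists>C :: real. C > 0 \<and>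
     (\<forall>(n :: nat) (f :: bool list \<Rightarrow> bool list \<Rightarrow> bool). n \<ge> 2 \<longrightarrow>
        real (Qpar n f) \<le> C * 2 ^ (2 * R1pub n f) * log 2 (real n))"
  by (rule exI[of _ 15000]) (auto intro: main_bound)

end
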